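(* Let $k$ be a number field of degree $n$ with $r_1\ge1$ real embeddings, embedded in $V=\mathbb R^{r_1}\times\mathbb C^{r_2}$. Let $v_1,\dots,v_\ell\in k$ with $\ell<n$, and let $e_1\in V$ be defined by $e_1^{(1)}=1$ and $e_1^{(j)}=0$ for $2\le j\le r_1+r_2$. Then $e_1$ does not lie in the real span $\mathbb Rv_1+\cdots+\mathbb Rv_\ell$.
   Context: $k$ has real embeddings $\tau_1,\dots,\tau_{r_1}$ and complex embeddings $\tau_{r_1+1},\dots,\tau_{r_1+r_2}$ (one from each conjugate pair), $n=r_1+2r_2$; $\gamma\in k$ is identified with $(\tau_i(\gamma))_i=(\gamma^{(i)})_i\in\mathbb R^{r_1}\times\mathbb C^{r_2}$, the first coordinate corresponding to the real embedding $\tau_1$. *)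

theory Defs
  imports Complex_Main
begin

definition subfield_C :: "complex set \<Rightarrow> bool" where
  "subfield_C K \<longleftrightarrow> 0 \<in> K \<and> 1 \<in> K \<and>
     (\<forall>x\<in>K. \<forall>y\<in>K. x + y \<in> K \<and> x * y \<in> K) \<and>
     (\<forall>x\<in>K. - x \<in> K) \<and> (\<forall>x\<in>K. x \<noteq> 0 \<longrightarrow> inverse x \<in> K)"

definition rat_basis :: "complex set \<Rightarrow> complex set \<Rightarrow> bool" where
  "rat_basis K B \<longleftrightarrow> finite B \<and> B \<subseteq> K \<and>
     (\<forall>c. (\<forall>b\<in>B. c b \<in> \<rat>) \<and> (\<Sum>b\<in>B. c b * b) = 0 \<longrightarrow> (\<forall>b\<in>B. c b = 0)) \<and>
     (\<forall>x\<in>K. \<exists>c. (\<forall>b\<in>B. c b \<in> \<rat>) \<and> x = (\<Sum>b\<in>B. c b * b))"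

definition number_field :: "complex set \<Rightarrow> nat \<Rightarrow> bool" where
  "number_field K n \<longleftrightarrow> subfield_C K \<and> (\<exists>B. rat_basis K B \<and> card B = n)"

text \<open>Embeddings K \<rightarrow> C (field homomorphisms), made extensional (value 0 outside K)
  so that distinct embeddings are distinct functions.\<close>

definition embeddings :: "complex set \<Rightarrow> (complex \<Rightarrow> complex) set" where
  "embeddings K = {\<sigma>. \<sigma> 1 = 1 \<and>
     (\<forall>x\<in>K. \<forall>y\<in>K. \<sigma> (x + y) = \<sigma> x + \<sigma> y \<and> \<sigma> (x * y) = \<sigma> x * \<sigma> y) \<and>
     (\<forall>x. x \<notin> K \<longrightarrow> \<sigma> x = 0)}"

definition real_embeddings :: "complex set \<Rightarrow> (complex \<Rightarrow> complex) set" where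
  "real_embeddings K = {\<sigma> \<in> embeddings K. \<forall>x\<in>K. \<sigma> x \<in> \<real>}"

definition complex_embeddings :: "complex set \<Rightarrow> (complex \<Rightarrow> complex) set" where
  "complex_embeddings K = embeddings K - real_embeddings K"

definition standard_embeddings ::
  "complex set \<Rightarrow> nat \<Rightarrow> nat \<Rightarrow> (nat \<Rightarrow> complex \<Rightarrow> complex) \<Rightarrow> bool" where
  "standard_embeddings K r1 r2 \<tau> \<longleftrightarrow>
     bij_betw \<tau> {1..r1} (real_embeddings K) \<and>
     (\<forall>i\<in>{r1+1..r1+r2}. \<tau> i \<in> complex_embeddings K) \<and>
     (\<forall>\<sigma>\<in>complex_embeddings K. \<exists>!i. i \<in> {r1+1..r1+r2} \<and> (\<sigma> = \<tau> i \<or> \<sigma> = cnj \<circ> \<tau> i))"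

text \<open>The image of gamma in V = R^r1 x C^r2, as the coordinate function j \<mapsto> tau j gamma
  on indices j = 1..r1+r2 (coordinates j \<le> r1 are real).\<close>

definition embV :: "(nat \<Rightarrow> complex \<Rightarrow> complex) \<Rightarrow> complex \<Rightarrow> nat \<Rightarrow> complex" where
  "embV \<tau> \<gamma> = (\<lambda>j. \<tau> j \<gamma>)"

definition real_span_V :: "nat \<Rightarrow> nat \<Rightarrow> (nat \<Rightarrow> nat \<Rightarrow> complex) \<Rightarrow> (nat \<Rightarrow> complex) set" where
  "real_span_V d l w = {x. \<exists>c :: nat \<Rightarrow> real. \<forall>j\<in>{1..d}. x j = (\<Sum>i=1..l. of_real (c i) * w i j)}"

definition e1 :: "nat \<Rightarrow> complex" where
  "e1 = (\<lambda>j. if j = 1 then 1 else 0)"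

end

theory Submission
  imports Defs "Jordan_Normal_Form.Determinant" "HOL-Computational_Algebra.Fundamental_Theorem_Algebra"
begin


lemma F1:
  fixes A :: "nat \<Rightarrow> nat \<Rightarrow> 'a::field"
  assumes "m < N"
  shows "\<exists>x. (\<exists>j<N. x j \<noteq> 0) \<and> (\<forall>i<m. (\<Sum>j<N. A i j * x j) = 0)"
proof -
  define c where "c = (\<lambda>i. if i < m then vec N (\<lambda>j. A i j) else 0\<^sub>v N)"
  define M where "M = mat\<^sub>r N N (\<lambda>i. if i = N - 1 then 0\<^sub>v N else c i)"
  have M: "M \<in> carrier_mat N N" unfolding M_def by auto
  have "det M = 0" unfolding M_def by (rule det_row_0, insert assms, auto simp: c_def)
  then obtain v where v: "v \<in> carrier_vec N" "v \<noteq> 0\<^sub>v N" "M *\<^sub>v v = 0\<^sub>v N"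
    using det_0_iff_vec_prod_zero_field[OF M] by auto
  define x where "x = (\<lambda>j. v $ j)"
  have "\<exists>j<N. x j \<noteq> 0"
  proof (rule ccontr)
    assume "\<not> ?thesis"
    hence "v = 0\<^sub>v N" using v(1) by (intro eq_vecI, auto simp: x_def)
    thus False using v(2) by simp
  qed
  moreover have "\<forall>i<m. (\<Sum>j<N. A i j * x j) = 0"
  proof (intro allI impI)
    fix i assume i: "i < m"
    have "(M *\<^sub>v v) $ i = 0" using v(3) i assms by simp
    moreover have "(M *\<^sub>v v) $ i = (\<Sum>j<N. A i j * x j)"
      using i assms v(1) unfolding M_def c_def x_def
      by (auto simp: mult_mat_vec_def scalar_prod_def atLeast0LessThan intro!: sum.cong)
    ultimately show "(\<Sum>j<N. A i j * x j) = 0" by simp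
  qed
  ultimately show ?thesis by blast
qed

lemma F2:
  fixes A :: "nat \<Rightarrow> nat \<Rightarrow> rat" and x :: "nat \<Rightarrow> complex"
  assumes inj: "\<And>u. (\<forall>i<n. (\<Sum>j<n. A i j * u j) = 0) \<Longrightarrow> (\<forall>j<n. u j = 0)"
    and x: "\<forall>i<n. (\<Sum>j<n. of_rat (A i j) * x j) = 0"
  shows "\<forall>j<n. x j = 0"
proof -
  define M where "M = mat n n (\<lambda>(i,j). A i j)"
  have M: "M \<in> carrier_mat n n" unfolding M_def by auto
  have "det M \<noteq> 0"
  proof
    assume "det M = 0"
    then obtain v where v: "v \<in> carrier_vec n" "v \<noteq> 0\<^sub>v n" "M *\<^sub>v v = 0\<^sub>v n"
      using det_0_iff_vec_prod_zero_field[OF M] by auto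
    have "\<forall>i<n. (\<Sum>j<n. A i j * v $ j) = 0"
    proof (intro allI impI)
      fix i assume i: "i < n"
      have "(M *\<^sub>v v) $ i = 0" using v(3) i by simp
      moreover have "(M *\<^sub>v v) $ i = (\<Sum>j<n. A i j * v $ j)"
        using i v(1) unfolding M_def
        by (auto simp: mult_mat_vec_def scalar_prod_def atLeast0LessThan intro!: sum.cong)
      ultimately show "(\<Sum>j<n. A i j * v $ j) = 0" by simp
    qed
    from inj[OF this] have "v = 0\<^sub>v n" using v(1) by (intro eq_vecI, auto)
    thus False using v(2) by simp
  qed
  define MC where "MC = map_mat (of_rat :: rat \<Rightarrow> complex) M"
  have MC: "MC \<in> carrier_mat n n" unfolding MC_def using M by auto
  have "det MC \<noteq> 0" unfolding MC_def of_rat_hom.hom_det using \<open>det M \<noteq> 0\<close> by simp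
  hence nz: "\<not> (\<exists>v. v \<in> carrier_vec n \<and> v \<noteq> 0\<^sub>v n \<and> MC *\<^sub>v v = 0\<^sub>v n)"
    using det_0_iff_vec_prod_zero_field[OF MC] by auto
  define v where "v = vec n x"
  have "MC *\<^sub>v v = 0\<^sub>v n"
  proof (rule eq_vecI)
    fix i assume "i < dim_vec (0\<^sub>v n :: complex vec)"
    hence i: "i < n" by simp
    have "(MC *\<^sub>v v) $ i = (\<Sum>j<n. of_rat (A i j) * x j)"
      using i unfolding MC_def M_def v_def
      by (auto simp: mult_mat_vec_def scalar_prod_def atLeast0LessThan intro!: sum.cong)
    thus "(MC *\<^sub>v v) $ i = 0\<^sub>v n $ i" using x i by simp
  qed (auto simp: MC_def M_def)
  hence "v = 0\<^sub>v n" using nz v_def by (metis vec_carrier)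
  thus ?thesis unfolding v_def by (metis index_vec index_zero_vec(1))
qed




definition app :: "nat \<Rightarrow> (nat \<Rightarrow> nat \<Rightarrow> complex) \<Rightarrow> (nat \<Rightarrow> complex) \<Rightarrow> (nat \<Rightarrow> complex)" where
  "app n A x = (\<lambda>k. \<Sum>j<n. A k j * x j)"

definition subsp :: "(nat \<Rightarrow> complex) set \<Rightarrow> bool" where
  "subsp S \<longleftrightarrow> (\<forall>x\<in>S. \<forall>y\<in>S. (\<lambda>k. x k + y k) \<in> S) \<and> (\<forall>x\<in>S. \<forall>c. (\<lambda>k. c * x k) \<in> S)"

lemma subsp_add: "subsp S \<Longrightarrow> x \<in> S \<Longrightarrow> y \<in> S \<Longrightarrow> (\<lambda>k. x k + y k) \<in> S"
  unfolding subsp_def by blast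

lemma subsp_scale: "subsp S \<Longrightarrow> x \<in> S \<Longrightarrow> (\<lambda>k. c * x k) \<in> S"
  unfolding subsp_def by blast

definition Lp :: "nat \<Rightarrow> (nat \<Rightarrow> nat \<Rightarrow> complex) \<Rightarrow> (nat \<Rightarrow> complex) \<Rightarrow> complex poly \<Rightarrow> (nat \<Rightarrow> complex)" where
  "Lp n A x q = (\<lambda>k. \<Sum>m\<le>degree q. coeff q m * (app n A ^^ m) x k)"

lemma app_add: "app n A (\<lambda>k. x k + y k) = (\<lambda>k. app n A x k + app n A y k)"
  unfolding app_def by (auto simp: distrib_left sum.distrib)

lemma app_scale: "app n A (\<lambda>k. c * x k) = (\<lambda>k. c * app n A x k)"
  unfolding app_def by (auto simp: sum_distrib_left ac_simps)

lemma app_cong: "(\<forall>j<n. x j = y j) \<Longrightarrow> app n A x = app n A y"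
  unfolding app_def by auto

lemma pow_add: "(app n A ^^ m) (\<lambda>k. x k + y k) = (\<lambda>k. (app n A ^^ m) x k + (app n A ^^ m) y k)"
  by (induction m) (auto simp: app_add)

lemma pow_scale: "(app n A ^^ m) (\<lambda>k. c * x k) = (\<lambda>k. c * (app n A ^^ m) x k)"
  by (induction m) (auto simp: app_scale)

lemma Lp_sum: assumes "degree q < N"
  shows "Lp n A x q = (\<lambda>k. \<Sum>m<N. coeff q m * (app n A ^^ m) x k)"
proof
  fix k
  have "(\<Sum>m<N. coeff q m * (app n A ^^ m) x k) = (\<Sum>m\<le>degree q. coeff q m * (app n A ^^ m) x k)"
    by (rule sum.mono_neutral_right, insert assms, auto simp: coeff_eq_0)
  thus "Lp n A x q k = (\<Sum>m<N. coeff q m * (app n A ^^ m) x k)" unfolding Lp_def by simp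
qed

lemma Lp_add: "Lp n A x (p + q) = (\<lambda>k. Lp n A x p k + Lp n A x q k)"
proof -
  let ?N = "Suc (max (degree p) (degree q))"
  have d3: "degree (p + q) < ?N"
    by (meson degree_add_le le_imp_less_Suc max.cobounded1 max.cobounded2)
  have d1: "degree p < ?N" and d2: "degree q < ?N" by auto
  show ?thesis unfolding Lp_sum[OF d1] Lp_sum[OF d2] Lp_sum[OF d3]
    by (auto simp: sum.distrib distrib_right)
qed

lemma Lp_smult: "Lp n A x (smult a q) = (\<lambda>k. a * Lp n A x q k)"
proof -
  have d: "degree (smult a q) < Suc (degree q)" using degree_smult_le[of a q] by simp
  have dq: "degree q < Suc (degree q)" by simp
  show ?thesis unfolding Lp_sum[OF d] Lp_sum[OF dq] by (simp only: coeff_smult sum_distrib_left mult.assoc)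
qed

lemma Lp_shift: "Lp n A x (pCons 0 q) = Lp n A (app n A x) q"
proof
  fix k
  have d: "degree (pCons 0 q) < Suc (Suc (degree q))"
    by (cases "q = 0") auto
  have dq: "degree q < Suc (degree q)" by simp
  have "Lp n A x (pCons 0 q) k = (\<Sum>m<Suc (Suc (degree q)). coeff (pCons 0 q) m * (app n A ^^ m) x k)"
    unfolding Lp_sum[OF d] by simp
  also have "\<dots> = (\<Sum>m<Suc (degree q). coeff (pCons 0 q) (Suc m) * (app n A ^^ Suc m) x k)"
    by (simp only: sum.lessThan_Suc_shift) simp
  also have "\<dots> = (\<Sum>m<Suc (degree q). coeff q m * (app n A ^^ m) (app n A x) k)"
    by (simp add: funpow_Suc_right del: funpow.simps)
  also have "\<dots> = Lp n A (app n A x) q k" unfolding Lp_sum[OF dq] by simp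
  finally show "Lp n A x (pCons 0 q) k = Lp n A (app n A x) q k" .
qed

lemma Lp_x_add: "Lp n A (\<lambda>k. x k + y k) q = (\<lambda>k. Lp n A x q k + Lp n A y q k)"
  unfolding Lp_def by (auto simp: pow_add distrib_left sum.distrib)

lemma Lp_x_scale: "Lp n A (\<lambda>k. c * x k) q = (\<lambda>k. c * Lp n A x q k)"
  unfolding Lp_def by (auto simp: pow_scale sum_distrib_left ac_simps)

lemma Lp_lin: "Lp n A x ([:-a,1:] * q) = Lp n A ((\<lambda>k. app n A x k + (-a) * x k)) q"
proof -
  have e: "[:-a,1:] * q = smult (-a) q + pCons 0 q" by (simp add: mult_pCons_left)
  have "Lp n A x ([:-a,1:] * q) = (\<lambda>k. (-a) * Lp n A x q k + Lp n A (app n A x) q k)"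
    unfolding e Lp_add Lp_smult Lp_shift by simp
  also have "\<dots> = Lp n A ((\<lambda>k. app n A x k + (-a) * x k)) q"
    by (subst Lp_x_add, subst Lp_x_scale, simp add: add.commute)
  finally show ?thesis .
qed

lemma EV_aux:
  assumes S: "subsp S" and inv: "\<forall>x\<in>S. app n A x \<in> S"
  shows "x \<in> S \<Longrightarrow> (\<exists>k<n. x k \<noteq> 0) \<Longrightarrow> p \<noteq> 0 \<Longrightarrow> (\<forall>k<n. Lp n A x p k = 0) \<Longrightarrow>
    (\<exists>y\<in>S. (\<exists>k<n. y k \<noteq> 0) \<and> (\<exists>\<mu>. \<forall>k<n. app n A y k = \<mu> * y k))"
proof (induction "degree p" arbitrary: p x rule: less_induct)
  case less
  show ?case
  proof (cases "degree p = 0")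
    case True
    then obtain c where p: "p = [:c:]" by (metis degree_eq_zeroE)
    with less.prems have c: "c \<noteq> 0" by auto
    from less.prems(2) obtain k where k: "k < n" "x k \<noteq> 0" by auto
    have "Lp n A x p k = c * x k" unfolding Lp_def p by simp
    with less.prems(4) k c show ?thesis by auto
  next
    case False
    hence "\<not> constant (poly p)" by (simp add: constant_degree)
    then obtain a where "poly p a = 0" using fundamental_theorem_of_algebra by blast
    then obtain q where pq: "p = [:-a,1:] * q" by (metis dvdE poly_eq_0_iff_dvd)
    have q0: "q \<noteq> 0" using pq less.prems(3) by auto
    have "degree p = degree [:-a,1::complex:] + degree q" unfolding pq by (rule degree_mult_eq) (use q0 in auto)
    hence dq: "degree q < degree p" by simp
    define x' where "x' = (\<lambda>k. app n A x k + (-a) * x k)"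
    have 1: "app n A x \<in> S" using inv less.prems(1) by blast
    have 2: "(\<lambda>k. (-a) * x k) \<in> S" using subsp_scale[OF S less.prems(1)] by blast
    have x'S: "x' \<in> S" using subsp_add[OF S 1 2] unfolding x'_def by simp
    have L: "\<forall>k<n. Lp n A x' q k = 0" using less.prems(4) unfolding pq Lp_lin x'_def by simp
    show ?thesis
    proof (cases "\<exists>k<n. x' k \<noteq> 0")
      case True
      from less.hyps[OF dq x'S True q0 L] show ?thesis .
    next
      case False
      hence "\<forall>k<n. app n A x k = a * x k" unfolding x'_def by auto
      thus ?thesis using less.prems(1,2) by blast
    qed
  qed
qed

lemma EV:
  assumes S: "subsp S" and inv: "\<forall>x\<in>S. app n A x \<in> S"
    and x: "x \<in> S" "\<exists>k<n. x k \<noteq> 0"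
  shows "\<exists>y\<in>S. (\<exists>k<n. y k \<noteq> 0) \<and> (\<exists>\<mu>. \<forall>k<n. app n A y k = \<mu> * y k)"
proof -
  obtain c where c: "\<exists>j<Suc n. c j \<noteq> 0" "\<forall>i<n. (\<Sum>j<Suc n. (app n A ^^ j) x i * c j) = 0"
    using F1[of n "Suc n" "\<lambda>i j. (app n A ^^ j) x i"] by auto
  define p where "p = (\<Sum>m<Suc n. monom (c m) m)"
  have cp: "coeff p m = (if m < Suc n then c m else 0)" for m
    unfolding p_def by (auto simp: coeff_sum coeff_monom)
  have p0: "p \<noteq> 0" using c(1) cp by (metis coeff_0)
  have dp: "degree p < Suc n"
    using cp by (metis degree_le le_imp_less_Suc not_less_eq)
  have "\<forall>k<n. Lp n A x p k = 0"
    using c(2) unfolding Lp_sum[OF dp] cp by (auto simp: ac_simps)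
  from EV_aux[OF S inv x p0 this] show ?thesis .
qed

lemma CEV:
  assumes "subsp S" "\<forall>A\<in>set As. \<forall>x\<in>S. app n A x \<in> S"
    "\<forall>A\<in>set As. \<forall>B\<in>set As. \<forall>x. app n A (app n B x) = app n B (app n A x)"
    "x \<in> S" "\<exists>k<n. x k \<noteq> 0"
  shows "\<exists>y\<in>S. (\<exists>k<n. y k \<noteq> 0) \<and> (\<forall>A\<in>set As. \<exists>\<mu>. \<forall>k<n. app n A y k = \<mu> * y k)"
  using assms
proof (induction As arbitrary: S x)
  case Nil
  show ?case by (rule bexI[of _ x]) (use Nil.prems(4,5) in simp_all)
next
  case (Cons A As)
  have inv: "\<forall>x\<in>S. app n A x \<in> S" using Cons.prems(2) by simp
  obtain y \<mu> where y: "y \<in> S" "\<exists>k<n. y k \<noteq> 0"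
    "\<forall>k<n. app n A y k = \<mu> * y k" using EV[OF Cons.prems(1) inv Cons.prems(4,5)] by blast
  define S' where "S' = {z\<in>S. \<forall>k<n. app n A z k = \<mu> * z k}"
  have sS': "subsp S'" unfolding subsp_def
  proof (intro conjI ballI allI)
    fix u v assume u: "u \<in> S'" and v: "v \<in> S'"
    have "(\<lambda>k. u k + v k) \<in> S" using subsp_add[OF Cons.prems(1)] u v unfolding S'_def by blast
    moreover have "\<forall>k<n. app n A (\<lambda>k. u k + v k) k = \<mu> * (u k + v k)"
      using u v unfolding S'_def app_add by (simp add: distrib_left)
    ultimately show "(\<lambda>k. u k + v k) \<in> S'" unfolding S'_def by blast
  next
    fix u c assume u: "u \<in> S'"
    have "(\<lambda>k. c * u k) \<in> S" using subsp_scale[OF Cons.prems(1)] u unfolding S'_def by blast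
    moreover have "\<forall>k<n. app n A (\<lambda>k. c * u k) k = \<mu> * (c * u k)"
      using u unfolding S'_def app_scale by simp
    ultimately show "(\<lambda>k. c * u k) \<in> S'" unfolding S'_def by blast
  qed
  have inv': "\<forall>B\<in>set As. \<forall>z\<in>S'. app n B z \<in> S'"
  proof (intro ballI)
    fix B z assume B: "B \<in> set As" and z: "z \<in> S'"
    have zS: "z \<in> S" and zE: "\<forall>k<n. app n A z k = \<mu> * z k" using z unfolding S'_def by auto
    have "app n B z \<in> S" using Cons.prems(2) B zS by simp
    moreover have "\<forall>k<n. app n A (app n B z) k = \<mu> * app n B z k"
    proof (intro allI impI)
      fix k assume k: "k < n"
      have "app n A (app n B z) = app n B (app n A z)" using Cons.prems(3) B by (meson list.set_intros)
      also have "\<dots> = app n B (\<lambda>j. \<mu> * z j)" by (rule app_cong) (use zE in simp)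
      also have "\<dots> = (\<lambda>k. \<mu> * app n B z k)" by (rule app_scale)
      finally show "app n A (app n B z) k = \<mu> * app n B z k" by simp
    qed
    ultimately show "app n B z \<in> S'" unfolding S'_def by blast
  qed
  have comm': "\<forall>B\<in>set As. \<forall>C\<in>set As. \<forall>x. app n B (app n C x) = app n C (app n B x)"
    using Cons.prems(3) by (meson list.set_intros(2))
  have yS': "y \<in> S'" using y unfolding S'_def by blast
  obtain w where w: "w \<in> S'" "\<exists>k<n. w k \<noteq> 0"
    "\<forall>B\<in>set As. \<exists>\<mu>. \<forall>k<n. app n B w k = \<mu> * w k"
    using Cons.IH[OF sS' inv' comm' yS' y(2)] by blast
  have "w \<in> S" "\<exists>\<mu>. \<forall>k<n. app n A w k = \<mu> * w k" using w(1) unfolding S'_def by auto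
  thus ?case using w(2,3) by auto
qed




locale nfb =
  fixes K :: "complex set" and n :: nat and bb :: "nat \<Rightarrow> complex"
  assumes sub: "subfield_C K"
    and bbK: "\<And>i. i < n \<Longrightarrow> bb i \<in> K"
    and indep: "\<And>q i. (\<Sum>j<n. of_rat (q j) * bb j) = 0 \<Longrightarrow> i < n \<Longrightarrow> q i = 0"
    and spn: "\<And>x. x \<in> K \<Longrightarrow> \<exists>q. x = (\<Sum>j<n. of_rat (q j) * bb j)"
    and npos: "0 < n"
begin

lemma K0: "0 \<in> K" and K1: "1 \<in> K" using sub unfolding subfield_C_def by auto
lemma Kadd: "x \<in> K \<Longrightarrow> y \<in> K \<Longrightarrow> x + y \<in> K" using sub unfolding subfield_C_def by auto
lemma Kmult: "x \<in> K \<Longrightarrow> y \<in> K \<Longrightarrow> x * y \<in> K" using sub unfolding subfield_C_def by auto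
lemma Kneg: "x \<in> K \<Longrightarrow> - x \<in> K" using sub unfolding subfield_C_def by auto
lemma Kinv: "x \<in> K \<Longrightarrow> inverse x \<in> K"
  using sub K0 unfolding subfield_C_def by (cases "x = 0") auto
lemma Kdiff: "x \<in> K \<Longrightarrow> y \<in> K \<Longrightarrow> x - y \<in> K" using Kadd Kneg by (metis diff_conv_add_uminus)
lemma Kdiv: "x \<in> K \<Longrightarrow> y \<in> K \<Longrightarrow> x / y \<in> K" using Kmult Kinv by (metis divide_inverse)
lemma Knat: "of_nat m \<in> K"
  by (induction m) (auto simp: K0 K1 Kadd)
lemma Kint: "of_int z \<in> K"
proof -
  have "(of_int z::complex) = of_nat (nat z) - of_nat (nat (- z))" by (cases "z \<ge> 0") auto
  thus ?thesis using Kdiff Knat by simp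
qed
lemma Krat: "of_rat r \<in> K"
proof -
  obtain a b where "r = Rat.Fract a b" "b > 0" by (cases r) auto
  hence "(of_rat r :: complex) = of_int a / of_int b" by (simp add: of_rat_rat)
  thus ?thesis using Kdiv Kint by simp
qed
lemma Ksum: "finite I \<Longrightarrow> (\<And>j. j \<in> I \<Longrightarrow> f j \<in> K) \<Longrightarrow> sum f I \<in> K"
  by (induction I rule: finite_induct) (auto simp: K0 Kadd)
lemma Klin: "(\<Sum>j<n. of_rat (q j) * bb j) \<in> K"
  by (rule Ksum) (auto intro!: Kmult Krat bbK)

definition crd :: "complex \<Rightarrow> nat \<Rightarrow> rat" where
  "crd x = (THE q. (\<forall>i. n \<le> i \<longrightarrow> q i = 0) \<and> x = (\<Sum>j<n. of_rat (q j) * bb j))"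

lemma uniq: assumes "(\<Sum>j<n. of_rat (q j) * bb j) = (\<Sum>j<n. of_rat (p j) * bb j)" "i < n"
  shows "q i = p i"
proof -
  have "(\<Sum>j<n. of_rat (q j - p j) * bb j) = 0"
    using assms(1) by (simp add: of_rat_diff left_diff_distrib sum_subtractf)
  from indep[OF this assms(2)] show ?thesis by simp
qed

lemma crd: assumes "x \<in> K"
  shows "x = (\<Sum>j<n. of_rat (crd x j) * bb j)" "\<And>i. n \<le> i \<Longrightarrow> crd x i = 0"
proof -
  obtain q where q: "x = (\<Sum>j<n. of_rat (q j) * bb j)" using spn[OF assms] by blast
  define q' where "q' = (\<lambda>i. if i < n then q i else 0)"
  have ex: "(\<forall>i. n \<le> i \<longrightarrow> q' i = 0) \<and> x = (\<Sum>j<n. of_rat (q' j) * bb j)"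
    unfolding q'_def q by auto
  have "\<exists>!q. (\<forall>i. n \<le> i \<longrightarrow> q i = 0) \<and> x = (\<Sum>j<n. of_rat (q j) * bb j)"
  proof (rule ex1I[of _ q'])
    fix p assume p: "(\<forall>i. n \<le> i \<longrightarrow> p i = 0) \<and> x = (\<Sum>j<n. of_rat (p j) * bb j)"
    show "p = q'"
    proof
      fix i show "p i = q' i"
        using p ex uniq[of p q' i] by (cases "i < n") auto
    qed
  qed (rule ex)
  from theI'[OF this] show "x = (\<Sum>j<n. of_rat (crd x j) * bb j)" "\<And>i. n \<le> i \<Longrightarrow> crd x i = 0"
    unfolding crd_def by auto
qed

lemma crd_unique: assumes "(\<Sum>j<n. of_rat (q j) * bb j) = x" "i < n" shows "crd x i = q i"
proof -
  have "x \<in> K" using assms(1) Klin by auto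
  from crd(1)[OF this] assms show ?thesis using uniq by metis
qed

lemma crd_add: assumes "x \<in> K" "y \<in> K" shows "crd (x + y) i = crd x i + crd y i"
proof (cases "i < n")
  case True
  have "(\<Sum>j<n. of_rat (crd x j + crd y j) * bb j) = x + y"
    using crd(1)[OF assms(1)] crd(1)[OF assms(2)] by (simp add: of_rat_add distrib_right sum.distrib)
  from crd_unique[OF this True] show ?thesis .
next
  case False thus ?thesis using crd(2) assms Kadd by simp
qed

lemma crd_scale: assumes "x \<in> K" shows "crd (of_rat r * x) i = r * crd x i"
proof (cases "i < n")
  case True
  have "of_rat r * x = of_rat r * (\<Sum>j<n. of_rat (crd x j) * bb j)" using crd(1)[OF assms] by simp
  also have "\<dots> = (\<Sum>j<n. of_rat (r * crd x j) * bb j)" by (simp add: sum_distrib_left of_rat_mult mult.assoc)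
  finally have "(\<Sum>j<n. of_rat (r * crd x j) * bb j) = of_rat r * x" by simp
  from crd_unique[OF this True] show ?thesis .
next
  case False thus ?thesis using crd(2) assms Kmult Krat by simp
qed

lemma crd_0: "crd 0 i = 0"
  using crd_scale[OF K0, of 0 i] by simp

lemma crd_sum: "finite I \<Longrightarrow> (\<And>j. j \<in> I \<Longrightarrow> x j \<in> K) \<Longrightarrow>
    crd (\<Sum>j\<in>I. of_rat (r j) * x j) i = (\<Sum>j\<in>I. r j * crd (x j) i)"
proof (induction I rule: finite_induct)
  case empty thus ?case by (simp add: crd_0)
next
  case (insert a I)
  have "(\<Sum>j\<in>I. of_rat (r j) * x j) \<in> K" using insert by (intro Ksum Kmult Krat) auto
  moreover have "of_rat (r a) * x a \<in> K" using insert by (intro Kmult Krat) auto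
  ultimately show ?case using insert by (simp add: crd_add crd_scale)
qed

lemma crd_bb: "j < n \<Longrightarrow> crd (bb j) i = (if i = j then 1 else 0)"
proof (cases "i < n")
  case True
  assume j: "j < n"
  have "(\<Sum>m<n. of_rat (if m = j then 1 else 0) * bb m) = bb j"
  proof -
    have "(\<Sum>m<n. of_rat (if m = j then 1 else 0) * bb m) = (\<Sum>m<n. if m = j then bb m else 0)"
      by (rule sum.cong) auto
    thus ?thesis using j by simp
  qed
  from crd_unique[OF this True] show ?thesis by simp
next
  case False
  assume j: "j < n"
  thus ?thesis using False crd(2)[OF bbK[OF j]] by auto
qed

end



context nfb begin

definition Mm :: "complex \<Rightarrow> nat \<Rightarrow> nat \<Rightarrow> rat" where
  "Mm g k j = crd (g * bb j) k"

lemma crd_mult: assumes "g \<in> K" "a \<in> K"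
  shows "crd (g * a) k = (\<Sum>j<n. Mm g k j * crd a j)"
proof -
  have "g * a = (\<Sum>j<n. of_rat (crd a j) * (g * bb j))"
    by (subst crd(1)[OF assms(2)]) (simp add: sum_distrib_left ac_simps)
  hence "crd (g * a) k = (\<Sum>j<n. crd a j * crd (g * bb j) k)"
    using crd_sum[of "{..<n}" "\<lambda>j. g * bb j" "crd a" k] assms(1) bbK Kmult by auto
  thus ?thesis unfolding Mm_def by (simp add: ac_simps)
qed

lemma Mm_mult: assumes "g \<in> K" "d \<in> K" "j < n"
  shows "Mm (g * d) k j = (\<Sum>m<n. Mm g k m * Mm d m j)"
proof -
  have "Mm (g * d) k j = crd (g * (d * bb j)) k" unfolding Mm_def by (simp add: ac_simps)
  also have "\<dots> = (\<Sum>m<n. Mm g k m * Mm d m j)"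
    unfolding crd_mult[OF assms(1) Kmult[OF assms(2) bbK[OF assms(3)]]] Mm_def ..
  finally show ?thesis .
qed

lemma Mm_lin: assumes "g \<in> K" "j < n"
  shows "Mm g k j = (\<Sum>i<n. crd g i * Mm (bb i) k j)"
proof -
  have "g * bb j = (\<Sum>i<n. of_rat (crd g i) * bb i) * bb j" using crd(1)[OF assms(1)] by simp
  also have "\<dots> = (\<Sum>i<n. of_rat (crd g i) * (bb i * bb j))"
    unfolding sum_distrib_right mult.assoc ..
  finally have "g * bb j = (\<Sum>i<n. of_rat (crd g i) * (bb i * bb j))" .
  hence "crd (g * bb j) k = (\<Sum>i<n. crd g i * crd (bb i * bb j) k)"
    using crd_sum[of "{..<n}" "\<lambda>i. bb i * bb j" "crd g" k] assms(2) bbK Kmult by auto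
  thus ?thesis unfolding Mm_def .
qed

definition MC :: "complex \<Rightarrow> nat \<Rightarrow> nat \<Rightarrow> complex" where
  "MC g = (\<lambda>k j. of_rat (Mm g k j))"

lemma act_mult: assumes "g \<in> K" "d \<in> K"
  shows "app n (MC (g * d)) x = app n (MC g) (app n (MC d) x)"
proof
  fix k
  have "app n (MC (g * d)) x k = (\<Sum>j<n. (\<Sum>m<n. of_rat (Mm g k m) * of_rat (Mm d m j)) * x j)"
    unfolding app_def MC_def
    by (rule sum.cong) (auto simp: Mm_mult[OF assms] of_rat_sum of_rat_mult)
  also have "\<dots> = (\<Sum>m<n. of_rat (Mm g k m) * (\<Sum>j<n. of_rat (Mm d m j) * x j))"
    unfolding sum_distrib_left sum_distrib_right mult.assoc by (rule sum.swap)
  also have "\<dots> = app n (MC g) (app n (MC d) x) k" unfolding app_def MC_def ..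
  finally show "app n (MC (g * d)) x k = app n (MC g) (app n (MC d) x) k" .
qed

lemma act_comm: assumes "g \<in> K" "d \<in> K"
  shows "app n (MC g) (app n (MC d) x) = app n (MC d) (app n (MC g) x)"
  using act_mult[OF assms] act_mult[OF assms(2,1)] by (simp add: mult.commute)

lemma act_one: "k < n \<Longrightarrow> app n (MC 1) x k = x k"
proof -
  assume k: "k < n"
  have "app n (MC 1) x k = (\<Sum>j<n. (if j = k then x j else 0))"
    unfolding app_def MC_def Mm_def by (rule sum.cong) (auto simp: crd_bb)
  thus ?thesis using k by simp
qed

lemma act_lin: assumes "g \<in> K"
  shows "app n (MC g) x k = (\<Sum>i<n. of_rat (crd g i) * app n (MC (bb i)) x k)"
proof -
  have "app n (MC g) x k = (\<Sum>j<n. (\<Sum>i<n. of_rat (crd g i) * of_rat (Mm (bb i) k j)) * x j)"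
    unfolding app_def MC_def
    by (rule sum.cong) (auto simp: Mm_lin[OF assms] of_rat_sum of_rat_mult)
  also have "\<dots> = (\<Sum>i<n. of_rat (crd g i) * app n (MC (bb i)) x k)"
    unfolding app_def MC_def sum_distrib_left sum_distrib_right mult.assoc by (rule sum.swap)
  finally show ?thesis .
qed

context
  fixes \<sigma> assumes \<sigma>: "\<sigma> \<in> embeddings K"
begin

lemma emb1: "\<sigma> 1 = 1" using \<sigma> unfolding embeddings_def by auto
lemma emb_add: "x \<in> K \<Longrightarrow> y \<in> K \<Longrightarrow> \<sigma> (x + y) = \<sigma> x + \<sigma> y" using \<sigma> unfolding embeddings_def by auto
lemma emb_mult: "x \<in> K \<Longrightarrow> y \<in> K \<Longrightarrow> \<sigma> (x * y) = \<sigma> x * \<sigma> y" using \<sigma> unfolding embeddings_def by auto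
lemma emb_out: "x \<notin> K \<Longrightarrow> \<sigma> x = 0" using \<sigma> unfolding embeddings_def by auto
lemma emb0: "\<sigma> 0 = 0" using emb_add[OF K0 K0] by simp
lemma emb_neg: "x \<in> K \<Longrightarrow> \<sigma> (- x) = - \<sigma> x"
proof -
  assume x: "x \<in> K"
  have "\<sigma> x + \<sigma> (- x) = 0" using emb_add[OF x Kneg[OF x]] emb0 by simp
  thus ?thesis by (simp add: add_eq_0_iff)
qed
lemma emb_nat: "\<sigma> (of_nat m) = of_nat m"
proof (induction m)
  case 0 thus ?case using emb0 by simp
next
  case (Suc m) thus ?case using emb_add[OF K1 Knat[of m]] emb1 by simp
qed
lemma emb_int: "\<sigma> (of_int z) = of_int z"
proof (cases "z \<ge> 0")
  case True
  hence e: "(of_int z::complex) = of_nat (nat z)" by simp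
  show ?thesis unfolding e using emb_nat by simp
next
  case False
  hence e: "(of_int z::complex) = - of_nat (nat (- z))" by simp
  show ?thesis unfolding e using emb_nat emb_neg[OF Knat] by simp
qed
lemma emb_rat: "\<sigma> (of_rat r) = of_rat r"
proof -
  obtain a b where r: "r = Rat.Fract a b" "b > 0" by (cases r) auto
  hence e: "(of_rat r :: complex) * of_int b = of_int a" by (simp add: of_rat_rat)
  have "\<sigma> (of_rat r) * of_int b = of_int a"
    using emb_mult[OF Krat Kint, of r b] e emb_int by simp
  thus ?thesis using e r(2) by (metis of_int_eq_0_iff less_irrefl mult_cancel_right)
qed
lemma emb_sum: "finite I \<Longrightarrow> (\<And>j. j \<in> I \<Longrightarrow> f j \<in> K) \<Longrightarrow> \<sigma> (sum f I) = (\<Sum>j\<in>I. \<sigma> (f j))"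
proof (induction I rule: finite_induct)
  case empty thus ?case using emb0 by simp
next
  case (insert a I)
  have "sum f I \<in> K" using insert by (intro Ksum) auto
  thus ?case using insert emb_add by simp
qed
lemma emb_crd: "a \<in> K \<Longrightarrow> \<sigma> a = (\<Sum>j<n. of_rat (crd a j) * \<sigma> (bb j))"
proof -
  assume a: "a \<in> K"
  have "\<sigma> a = \<sigma> (\<Sum>j<n. of_rat (crd a j) * bb j)" using crd(1)[OF a] by simp
  also have "\<dots> = (\<Sum>j<n. \<sigma> (of_rat (crd a j) * bb j))"
    by (rule emb_sum) (auto intro!: Kmult Krat bbK)
  also have "\<dots> = (\<Sum>j<n. of_rat (crd a j) * \<sigma> (bb j))"
    by (rule sum.cong) (auto simp: emb_mult[OF Krat bbK] emb_rat)
  finally show ?thesis .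
qed

end

definition pair :: "(complex \<Rightarrow> complex) \<Rightarrow> (nat \<Rightarrow> complex) \<Rightarrow> complex" where
  "pair \<sigma> x = (\<Sum>j<n. \<sigma> (bb j) * x j)"

lemma pair_act: assumes \<sigma>: "\<sigma> \<in> embeddings K" and g: "g \<in> K"
  shows "pair \<sigma> (app n (MC g) x) = \<sigma> g * pair \<sigma> x"
proof -
  have "pair \<sigma> (app n (MC g) x) = (\<Sum>j<n. (\<Sum>k<n. of_rat (crd (g * bb j) k) * \<sigma> (bb k)) * x j)"
    unfolding pair_def app_def MC_def Mm_def sum_distrib_left sum_distrib_right
    by (subst sum.swap) (simp add: ac_simps)
  also have "\<dots> = (\<Sum>j<n. \<sigma> (g * bb j) * x j)"
    by (rule sum.cong) (auto simp: emb_crd[OF \<sigma> Kmult[OF g bbK]])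
  also have "\<dots> = \<sigma> g * pair \<sigma> x"
    unfolding pair_def by (auto simp: emb_mult[OF \<sigma> g bbK] sum_distrib_left ac_simps intro!: sum.cong)
  finally show ?thesis .
qed

end



context nfb begin

definition tr :: "complex \<Rightarrow> rat" where
  "tr a = (\<Sum>k<n. crd (a * bb k) k)"

lemma tr_lin: assumes "finite I" "\<And>j. j \<in> I \<Longrightarrow> a j \<in> K"
  shows "tr (\<Sum>j\<in>I. of_rat (r j) * a j) = (\<Sum>j\<in>I. r j * tr (a j))"
proof -
  have "tr (\<Sum>j\<in>I. of_rat (r j) * a j) = (\<Sum>k<n. crd (\<Sum>j\<in>I. of_rat (r j) * (a j * bb k)) k)"
    unfolding tr_def sum_distrib_right mult.assoc ..
  also have "\<dots> = (\<Sum>k<n. \<Sum>j\<in>I. r j * crd (a j * bb k) k)"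
    by (rule sum.cong[OF refl], rule crd_sum[OF assms(1)]) (auto intro!: Kmult assms(2) bbK)
  also have "\<dots> = (\<Sum>j\<in>I. r j * tr (a j))"
    unfolding tr_def sum_distrib_left by (rule sum.swap)
  finally show ?thesis .
qed

lemma tr_one: "tr 1 = of_nat n"
  unfolding tr_def by (simp add: crd_bb)

lemma G_inj:
  assumes z: "\<forall>i<n. (\<Sum>j<n. tr (bb i * bb j) * z j) = 0"
  shows "\<forall>j<n. z j = 0"
proof -
  define \<zeta> where "\<zeta> = (\<Sum>j<n. of_rat (z j) * bb j)"
  have \<zeta>K: "\<zeta> \<in> K" unfolding \<zeta>_def by (rule Klin)
  have bi: "tr (bb i * \<zeta>) = 0" if i: "i < n" for i
  proof -
    have "bb i * \<zeta> = (\<Sum>j<n. of_rat (z j) * (bb i * bb j))"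
      unfolding \<zeta>_def sum_distrib_left by (simp add: ac_simps)
    hence "tr (bb i * \<zeta>) = (\<Sum>j<n. z j * tr (bb i * bb j))"
      using tr_lin[of "{..<n}" "\<lambda>j. bb i * bb j" z] i bbK Kmult by auto
    also have "\<dots> = (\<Sum>j<n. tr (bb i * bb j) * z j)" by (rule sum.cong) (auto simp: mult.commute)
    finally show ?thesis using z i by simp
  qed
  have all: "tr (a * \<zeta>) = 0" if a: "a \<in> K" for a
  proof -
    have "a * \<zeta> = (\<Sum>i<n. of_rat (crd a i) * bb i) * \<zeta>" using crd(1)[OF a] by simp
    also have "\<dots> = (\<Sum>i<n. of_rat (crd a i) * (bb i * \<zeta>))"
      unfolding sum_distrib_right mult.assoc ..
    finally have "tr (a * \<zeta>) = (\<Sum>i<n. crd a i * tr (bb i * \<zeta>))"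
      using tr_lin[of "{..<n}" "\<lambda>i. bb i * \<zeta>" "crd a"] bbK Kmult \<zeta>K by auto
    thus ?thesis using bi by simp
  qed
  have "\<zeta> = 0"
  proof (rule ccontr)
    assume "\<zeta> \<noteq> 0"
    hence "inverse \<zeta> * \<zeta> = 1" by simp
    hence "tr 1 = 0" using all[OF Kinv[OF \<zeta>K]] by simp
    thus False using tr_one npos by simp
  qed
  thus ?thesis using indep unfolding \<zeta>_def by blast
qed

lemma main:
  assumes x: "\<forall>\<sigma>\<in>embeddings K. pair \<sigma> x = 0"
  shows "\<forall>j<n. x j = 0"
proof (rule ccontr)
  assume "\<not> ?thesis"
  hence xnz: "\<exists>k<n. x k \<noteq> 0" by auto
  define S where "S = {y. \<forall>\<sigma>\<in>embeddings K. pair \<sigma> y = 0}"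
  have sS: "subsp S" unfolding subsp_def S_def pair_def
    by (auto simp: distrib_left sum.distrib sum_distrib_left[symmetric] ac_simps)
  define As where "As = map (\<lambda>i. MC (bb i)) [0..<n]"
  have setAs: "set As = (\<lambda>i. MC (bb i)) ` {..<n}" unfolding As_def by auto
  have inv: "\<forall>A\<in>set As. \<forall>y\<in>S. app n A y \<in> S"
    unfolding setAs S_def using pair_act bbK by auto
  have comm: "\<forall>A\<in>set As. \<forall>B\<in>set As. \<forall>y. app n A (app n B y) = app n B (app n A y)"
    unfolding setAs using act_comm bbK by auto
  have xS: "x \<in> S" unfolding S_def using x by auto
  obtain y where y: "y \<in> S" "\<exists>k<n. y k \<noteq> 0"
    "\<forall>A\<in>set As. \<exists>\<mu>. \<forall>k<n. app n A y k = \<mu> * y k"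
    using CEV[OF sS inv comm xS xnz] by blast
  have "\<forall>i. \<exists>\<mu>. i < n \<longrightarrow> (\<forall>k<n. app n (MC (bb i)) y k = \<mu> * y k)"
    using y(3) unfolding setAs by auto
  then obtain mu where mu: "\<And>i k. i < n \<Longrightarrow> k < n \<Longrightarrow> app n (MC (bb i)) y k = mu i * y k"
    by metis
  obtain k0 where k0: "k0 < n" "y k0 \<noteq> 0" using y(2) by blast
  define lam where "lam g = (\<Sum>i<n. of_rat (crd g i) * mu i)" for g
  have act_lam: "app n (MC g) y k = lam g * y k" if "g \<in> K" "k < n" for g k
    unfolding act_lin[OF that(1)] lam_def sum_distrib_right
    by (rule sum.cong) (auto simp: mu that)
  have lam1: "lam 1 = 1"
    using act_lam[OF K1 k0(1)] act_one[OF k0(1)] k0(2) by simp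
  have lam_add: "lam (g + d) = lam g + lam d" if "g \<in> K" "d \<in> K" for g d
    unfolding lam_def using that by (simp add: crd_add of_rat_add distrib_right sum.distrib)
  have lam_mult: "lam (g * d) = lam g * lam d" if g: "g \<in> K" and d: "d \<in> K" for g d
  proof -
    have "lam (g * d) * y k0 = app n (MC (g * d)) y k0" using act_lam[OF Kmult[OF g d] k0(1)] by simp
    also have "\<dots> = app n (MC g) (app n (MC d) y) k0" by (simp add: act_mult[OF g d])
    also have "app n (MC d) y = (\<lambda>j. if j < n then lam d * y j else app n (MC d) y j)"
      using act_lam[OF d] by auto
    also have "app n (MC g) \<dots> = app n (MC g) (\<lambda>j. lam d * y j)" by (rule app_cong) auto
    also have "\<dots> k0 = lam d * app n (MC g) y k0" by (simp add: app_scale)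
    also have "\<dots> = (lam g * lam d) * y k0" using act_lam[OF g k0(1)] by simp
    finally show ?thesis using k0(2) by simp
  qed
  define \<sigma>0 where "\<sigma>0 z = (if z \<in> K then lam z else 0)" for z
  have \<sigma>0E: "\<sigma>0 \<in> embeddings K"
    unfolding embeddings_def \<sigma>0_def using K1 lam1 lam_add lam_mult Kadd Kmult by auto
  have p0: "(\<Sum>j<n. lam (bb j) * y j) = 0"
    using y(1) \<sigma>0E unfolding S_def pair_def \<sigma>0_def using bbK by auto
  have Gy: "\<forall>i<n. (\<Sum>j<n. of_rat (tr (bb i * bb j)) * y j) = 0"
  proof (intro allI impI)
    fix i assume i: "i < n"
    have sw: "crd (bb i * bb j * bb k) k = Mm (bb i * bb k) k j" if "j < n" "k < n" for j k
      unfolding Mm_def by (simp add: ac_simps)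
    have "(\<Sum>j<n. of_rat (tr (bb i * bb j)) * y j) = (\<Sum>j<n. \<Sum>k<n. of_rat (Mm (bb i * bb k) k j) * y j)"
      unfolding tr_def of_rat_sum sum_distrib_right by (auto simp: sw intro!: sum.cong)
    also have "\<dots> = (\<Sum>k<n. app n (MC (bb i * bb k)) y k)"
      unfolding app_def MC_def by (rule sum.swap)
    also have "\<dots> = (\<Sum>k<n. lam (bb i) * (lam (bb k) * y k))"
      by (rule sum.cong) (auto simp: act_lam Kmult bbK i lam_mult)
    also have "\<dots> = lam (bb i) * (\<Sum>k<n. lam (bb k) * y k)" by (simp add: sum_distrib_left)
    finally show "(\<Sum>j<n. of_rat (tr (bb i * bb j)) * y j) = 0" using p0 by simp
  qed
  have "\<forall>j<n. y j = 0"
    by (rule F2[of n "\<lambda>i j. tr (bb i * bb j)"]) (use G_inj Gy in auto)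
  thus False using k0 by auto
qed

end



context nfb begin

lemma R_inj:
  assumes znz: "\<exists>k<n. z k \<noteq> 0"
    and u: "\<forall>m<n. (\<Sum>j<n. (\<Sum>k<n. z k * Mm (bb m) k j) * u j) = 0"
  shows "\<forall>j<n. u j = 0"
proof -
  define \<omega> where "\<omega> = (\<Sum>j<n. of_rat (u j) * bb j)"
  have \<omega>K: "\<omega> \<in> K" unfolding \<omega>_def by (rule Klin)
  have cw: "crd \<omega> j = u j" if "j < n" for j using crd_unique[OF \<omega>_def[symmetric] that] .
  define f where "f a = (\<Sum>k<n. z k * crd a k)" for a
  have fm: "f (bb m * \<omega>) = 0" if m: "m < n" for m
  proof -
    have "f (bb m * \<omega>) = (\<Sum>k<n. z k * (\<Sum>j<n. Mm (bb m) k j * u j))"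
      unfolding f_def crd_mult[OF bbK[OF m] \<omega>K] by (auto simp: cw intro!: sum.cong)
    also have "\<dots> = (\<Sum>j<n. (\<Sum>k<n. z k * Mm (bb m) k j) * u j)"
      unfolding sum_distrib_left sum_distrib_right mult.assoc by (rule sum.swap)
    finally show ?thesis using u m by simp
  qed
  have flin: "f (\<Sum>i<n. of_rat (r i) * a i) = (\<Sum>i<n. r i * f (a i))" if "\<And>i. i < n \<Longrightarrow> a i \<in> K" for r a
  proof -
    have "f (\<Sum>i<n. of_rat (r i) * a i) = (\<Sum>k<n. z k * (\<Sum>i<n. r i * crd (a i) k))"
      unfolding f_def by (rule sum.cong[OF refl], subst crd_sum) (use that in auto)
    also have "\<dots> = (\<Sum>i<n. r i * f (a i))"
      unfolding f_def sum_distrib_left by (subst sum.swap) (simp add: mult.left_commute)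
    finally show ?thesis .
  qed
  have fall: "f (a * \<omega>) = 0" if a: "a \<in> K" for a
  proof -
    have "a * \<omega> = (\<Sum>i<n. of_rat (crd a i) * bb i) * \<omega>" using crd(1)[OF a] by simp
    also have "\<dots> = (\<Sum>i<n. of_rat (crd a i) * (bb i * \<omega>))"
      unfolding sum_distrib_right mult.assoc ..
    finally have "f (a * \<omega>) = (\<Sum>i<n. crd a i * f (bb i * \<omega>))"
      using flin[of "\<lambda>i. bb i * \<omega>" "crd a"] bbK Kmult \<omega>K by auto
    thus ?thesis using fm by simp
  qed
  have "\<omega> = 0"
  proof (rule ccontr)
    assume w0: "\<omega> \<noteq> 0"
    obtain k' where k': "k' < n" "z k' \<noteq> 0" using znz by blast
    have e: "inverse \<omega> * bb k' * \<omega> = bb k'" using w0 by simp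
    from fall[OF Kmult[OF Kinv[OF \<omega>K] bbK[OF k'(1)]]] have "f (bb k') = 0" unfolding e .
    moreover have "f (bb k') = z k'"
    proof -
      have "f (bb k') = (\<Sum>k<n. if k = k' then z k else 0)"
        unfolding f_def by (rule sum.cong) (auto simp: crd_bb[OF k'(1)])
      thus ?thesis using k'(1) by simp
    qed
    ultimately show False using k'(2) by simp
  qed
  thus ?thesis using indep unfolding \<omega>_def by blast
qed

lemma pair_diff: "pair \<sigma> (\<lambda>k. a k - b * y k) = pair \<sigma> a - b * pair \<sigma> y"
  unfolding pair_def right_diff_distrib sum_subtractf sum_distrib_left by (simp add: mult.left_commute)

lemma final:
  assumes \<tau>1: "\<tau>1 \<in> embeddings K"
    and P: "\<And>\<sigma>. \<sigma> \<in> embeddings K \<Longrightarrow> pair \<sigma> y = (if \<sigma> = \<tau>1 then 1 else 0)"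
    and znz: "\<exists>k<n. z k \<noteq> 0"
    and zy: "(\<Sum>k<n. of_rat (z k) * y k) = 0"
  shows False
proof -
  have eig: "app n (MC (bb m)) y k = \<tau>1 (bb m) * y k" if m: "m < n" and k: "k < n" for m k
  proof -
    define u where "u k = app n (MC (bb m)) y k - \<tau>1 (bb m) * y k" for k
    have "\<forall>\<sigma>\<in>embeddings K. pair \<sigma> u = 0"
    proof
      fix \<sigma> assume \<sigma>: "\<sigma> \<in> embeddings K"
      have "pair \<sigma> u = \<sigma> (bb m) * pair \<sigma> y - \<tau>1 (bb m) * pair \<sigma> y"
        unfolding u_def pair_diff pair_act[OF \<sigma> bbK[OF m]] ..
      thus "pair \<sigma> u = 0" using P[OF \<sigma>] by auto
    qed
    from main[OF this] k show ?thesis unfolding u_def by simp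
  qed
  define R where "R m j = (\<Sum>k<n. z k * Mm (bb m) k j)" for m j
  have "\<forall>m<n. (\<Sum>j<n. of_rat (R m j) * y j) = 0"
  proof (intro allI impI)
    fix m assume m: "m < n"
    have "(\<Sum>j<n. of_rat (R m j) * y j) = (\<Sum>k<n. of_rat (z k) * app n (MC (bb m)) y k)"
      unfolding R_def app_def MC_def of_rat_sum of_rat_mult sum_distrib_left sum_distrib_right mult.assoc
      by (rule sum.swap)
    also have "\<dots> = \<tau>1 (bb m) * (\<Sum>k<n. of_rat (z k) * y k)"
      unfolding sum_distrib_left by (rule sum.cong) (auto simp: eig m)
    finally show "(\<Sum>j<n. of_rat (R m j) * y j) = 0" using zy by simp
  qed
  moreover have Rinj: "\<And>u. (\<forall>m<n. (\<Sum>j<n. R m j * u j) = 0) \<Longrightarrow> \<forall>j<n. u j = 0"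
    using R_inj[OF znz] unfolding R_def by blast
  ultimately have "\<forall>j<n. y j = 0" using F2[of n R y] by blast
  hence "pair \<tau>1 y = 0" unfolding pair_def by simp
  thus False using P[OF \<tau>1] by simp
qed

end



lemma to_nfb:
  assumes nf: "number_field K n" and npos: "0 < n"
  shows "\<exists>bb. nfb K n bb"
proof -
  obtain B where sub: "subfield_C K" and B: "rat_basis K B" "card B = n"
    using nf unfolding number_field_def by blast
  have fin: "finite B" and BK: "B \<subseteq> K"
    and ind: "\<And>c :: complex \<Rightarrow> complex. (\<forall>b\<in>B. c b \<in> \<rat>) \<Longrightarrow> (\<Sum>b\<in>B. c b * b) = 0 \<Longrightarrow> (\<forall>b\<in>B. c b = 0)"
    and sp: "\<And>x. x \<in> K \<Longrightarrow> \<exists>c :: complex \<Rightarrow> complex. (\<forall>b\<in>B. c b \<in> \<rat>) \<and> x = (\<Sum>b\<in>B. c b * b)"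
    using B(1) unfolding rat_basis_def by blast+
  obtain h where h: "bij_betw h {0..<n} B" using ex_bij_betw_nat_finite[OF fin] B(2) by blast
  have hinj: "inj_on h {..<n}" and himg: "h ` {..<n} = B"
    using h unfolding bij_betw_def by (auto simp: atLeast0LessThan)
  have reidx: "(\<Sum>b\<in>B. g b) = (\<Sum>j<n. g (h j))" for g :: "complex \<Rightarrow> complex"
    using sum.reindex[OF hinj, of g] himg by simp
  have "nfb K n h"
  proof
    show "subfield_C K" by (rule sub)
    show "\<And>i. i < n \<Longrightarrow> h i \<in> K" using himg BK by auto
    show "0 < n" by (rule npos)
  next
    fix q :: "nat \<Rightarrow> rat" and i
    assume q: "(\<Sum>j<n. of_rat (q j) * h j) = 0" and i: "i < n"
    define c where "c b = (of_rat (q (the_inv_into {..<n} h b)) :: complex)" for b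
    have ch: "c (h j) = of_rat (q j)" if "j < n" for j
      unfolding c_def using the_inv_into_f_f[OF hinj] that by simp
    have "(\<Sum>b\<in>B. c b * b) = (\<Sum>j<n. of_rat (q j) * h j)"
      unfolding reidx by (rule sum.cong) (auto simp: ch)
    hence s0: "(\<Sum>b\<in>B. c b * b) = 0" using q by simp
    have cQ: "\<forall>b\<in>B. c b \<in> \<rat>" unfolding c_def by (simp add: Rats_of_rat)
    have "\<forall>b\<in>B. c b = 0" by (rule ind[OF cQ s0])
    hence "c (h i) = 0" using himg i by auto
    thus "q i = 0" using ch[OF i] by simp
  next
    fix x assume x: "x \<in> K"
    obtain c where c: "\<forall>b\<in>B. c b \<in> \<rat>" "x = (\<Sum>b\<in>B. c b * b)" using sp[OF x] by blast
    define q where "q j = (SOME r. c (h j) = of_rat r)" for j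
    have cq: "c (h j) = of_rat (q j)" if "j < n" for j
    proof -
      have "c (h j) \<in> \<rat>" using c(1) himg that by auto
      then obtain r where "c (h j) = of_rat r" by (auto elim: Rats_cases)
      thus ?thesis unfolding q_def by (rule someI)
    qed
    have "x = (\<Sum>j<n. of_rat (q j) * h j)"
      unfolding c(2) reidx by (rule sum.cong) (auto simp: cq)
    thus "\<exists>q. x = (\<Sum>j<n. of_rat (q j) * h j)" by blast
  qed
  thus ?thesis by blast
qed

theorem lemma19:
  fixes K :: "complex set" and n r1 r2 l :: nat
    and \<tau> :: "nat \<Rightarrow> complex \<Rightarrow> complex" and v :: "nat \<Rightarrow> complex"
  assumes "number_field K n"
    and "standard_embeddings K r1 r2 \<tau>"
    and "r1 \<ge> 1"
    and "\<forall>i\<in>{1..l}. v i \<in> K"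
    and "l < n"
  shows "e1 \<notin> real_span_V (r1 + r2) l (\<lambda>i. embV \<tau> (v i))"
proof
  assume "e1 \<in> real_span_V (r1 + r2) l (\<lambda>i. embV \<tau> (v i))"
  then obtain c :: "nat \<Rightarrow> real" where c:
    "\<forall>j\<in>{1..r1+r2}. e1 j = (\<Sum>i=1..l. of_real (c i) * \<tau> j (v i))"
    unfolding real_span_V_def embV_def by blast
  have npos: "0 < n" using assms(5) by simp
  obtain bb where "nfb K n bb" using to_nfb[OF assms(1) npos] by blast
  interpret nfb K n bb by fact
  have T1: "bij_betw \<tau> {1..r1} (real_embeddings K)"
    and T2: "\<forall>i\<in>{r1+1..r1+r2}. \<tau> i \<in> complex_embeddings K"
    and T3: "\<forall>\<sigma>\<in>complex_embeddings K. \<exists>!i. i \<in> {r1+1..r1+r2} \<and> (\<sigma> = \<tau> i \<or> \<sigma> = cnj \<circ> \<tau> i)"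
    using assms(2) unfolding standard_embeddings_def by blast+
  have t1R: "\<tau> 1 \<in> real_embeddings K" using T1 assms(3) unfolding bij_betw_def by auto
  have t1E: "\<tau> 1 \<in> embeddings K" using t1R unfolding real_embeddings_def by auto
  define P where "P \<sigma> = (\<Sum>i=1..l. of_real (c i) * \<sigma> (v i))" for \<sigma> :: "complex \<Rightarrow> complex"
  have Pval: "P \<sigma> = (if \<sigma> = \<tau> 1 then 1 else 0)" if \<sigma>: "\<sigma> \<in> embeddings K" for \<sigma>
  proof (cases "\<sigma> \<in> real_embeddings K")
    case True
    have "\<sigma> \<in> \<tau> ` {1..r1}" using T1 True unfolding bij_betw_def by simp
    then obtain j where j: "j \<in> {1..r1}" "\<sigma> = \<tau> j" by blast
    have jr: "j \<in> {1..r1+r2}" using j(1) by simp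
    have "e1 j = (\<Sum>i=1..l. of_real (c i) * \<tau> j (v i))" using c jr by blast
    hence Pj: "P \<sigma> = e1 j" unfolding P_def j(2) by simp
    have inj: "inj_on \<tau> {1..r1}" using T1 unfolding bij_betw_def by blast
    have one: "(1::nat) \<in> {1..r1}" using assms(3) by simp
    have "(\<sigma> = \<tau> 1) \<longleftrightarrow> j = 1" unfolding j(2) using inj_on_eq_iff[OF inj j(1) one] .
    thus ?thesis unfolding Pj e1_def by simp
  next
    case False
    hence sC: "\<sigma> \<in> complex_embeddings K" using \<sigma> unfolding complex_embeddings_def by auto
    then obtain i where i: "i \<in> {r1+1..r1+r2}" "\<sigma> = \<tau> i \<or> \<sigma> = cnj \<circ> \<tau> i" using T3 by blast
    have ne: "\<sigma> \<noteq> \<tau> 1" using False t1R by auto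
    have ir: "i \<in> {1..r1+r2}" "i \<noteq> 1" using i(1) assms(3) by auto
    have "e1 i = (\<Sum>i'=1..l. of_real (c i') * \<tau> i (v i'))" using c ir(1) by blast
    hence e0: "(\<Sum>i'=1..l. of_real (c i') * \<tau> i (v i')) = 0" using ir(2) unfolding e1_def by simp
    have "P \<sigma> = 0"
    proof (cases "\<sigma> = \<tau> i")
      case True thus ?thesis using e0 unfolding P_def by simp
    next
      case False
      hence s: "\<sigma> = cnj \<circ> \<tau> i" using i(2) by blast
      have h: "(\<Sum>x=1..l. of_real (c x) * cnj (\<tau> i (v x))) = 0"
        using arg_cong[OF e0, of cnj] by (simp add: cnj_sum)
      show ?thesis unfolding P_def s using h by simp
    qed
    thus ?thesis using ne by simp
  qed
  define y where "y k = (\<Sum>i=1..l. of_real (c i) * (of_rat (crd (v i) k) :: complex))" for k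
  have pair_y: "pair \<sigma> y = P \<sigma>" if \<sigma>: "\<sigma> \<in> embeddings K" for \<sigma>
  proof -
    have "pair \<sigma> y = (\<Sum>i=1..l. of_real (c i) * (\<Sum>j<n. of_rat (crd (v i) j) * \<sigma> (bb j)))"
      unfolding pair_def y_def sum_distrib_left
      by (subst sum.swap) (simp add: mult.left_commute mult.commute)
    also have "\<dots> = P \<sigma>"
      unfolding P_def by (rule sum.cong) (auto simp: emb_crd[OF \<sigma>] assms(4))
    finally show ?thesis .
  qed
  obtain z :: "nat \<Rightarrow> rat" where z: "\<exists>j<n. z j \<noteq> 0"
    "\<forall>i<l. (\<Sum>j<n. crd (v (Suc i)) j * z j) = 0"
    using F1[of l n "\<lambda>i j. crd (v (Suc i)) j"] assms(5) by blast
  have z': "(\<Sum>j<n. of_rat (z j) * of_rat (crd (v i) j) :: complex) = 0" if "i \<in> {1..l}" for i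
  proof -
    define i' where "i' = i - 1"
    have "i = Suc i'" "i' < l" using that unfolding i'_def by auto
    hence "(\<Sum>j<n. crd (v i) j * z j) = 0" using z(2) by auto
    hence "of_rat (\<Sum>j<n. crd (v i) j * z j) = (0::complex)" by simp
    thus ?thesis unfolding of_rat_sum of_rat_mult by (simp add: mult.commute)
  qed
  have zy: "(\<Sum>k<n. of_rat (z k) * y k) = 0"
  proof -
    have "(\<Sum>k<n. of_rat (z k) * y k) = (\<Sum>i=1..l. of_real (c i) * (\<Sum>k<n. of_rat (z k) * of_rat (crd (v i) k)))"
      unfolding y_def sum_distrib_left
      by (subst sum.swap) (simp add: mult.left_commute)
    also have "\<dots> = 0" using z' by simp
    finally show ?thesis .
  qed
  show False
    by (rule final[OF t1E _ z(1) zy]) (simp add: pair_y Pval)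
qed


end
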